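(* Let $G$ be a snark, let $uwv$ be a path of length two in $G$, let $N=\operatorname{Neg}(G;u,v)$, let $x\in\{u,v\}$ and $y\in V(N)$. Assume that for every edge $e$ incident with $x$ in $G$ there is an edge $f$ incident with $y$ in $G$ such that $\{e,f\}$ is an essential pair of edges of $G$. Then for any two dangling edges $e',f'$ of the $6$-pole $G-\{x,y\}$ that were formerly incident with $x$, there exists a colouring $\varphi$ of $G-\{x,y\}$ with $\varphi(e')=\varphi(f')$.
   Context: A colouring of a graph or multipole is an assignment of three colours to its edges such that edge ends meeting at any vertex have distinct colours. A snark is a connected cubic graph (loops and parallel edges allowed) with no colouring. Negator: for a snark $G$ and a path $uwv$ in $G$, $\operatorname{Neg}(G;u,v)$ is the multipole obtained by deleting $u,w,v$ from $G$ (edges to remaining vertices become dangling edges); $V(N)$ denotes its vertex set. $G-\{x,y\}$ denotes the multipole obtained by deleting the vertices $x,y$, where edges joining them to other vertices become dangling edges and an edge $xy$, if present, is kept as an isolated edge (so it is a $6$-pole). A pair $\{e,f\}$ of edges of a snark $G$ is essential if the graph $G-\{e,f\}$ (delete the two edges, keep all vertices) is colourable and, for every $2$-valent vertex $z$ of $G-\{e,f\}$, the graph obtained from $G-\{e,f\}$ by suppressing $z$ (replacing the two edges at $z$ by a single edge) is colourable. *)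

theory Defs
  imports Main
begin

text \<open>Multipoles (graphs with possible dangling / isolated edges), loops and
parallel edges allowed.  Every edge e has two ends (e,True) and (e,False);
an end is either attached to a vertex (Some v) or free (None).\<close>

record ('v,'e) mpole =
  verts :: "'v set"
  edges :: "'e set"
  ends  :: "'e \<times> bool \<Rightarrow> 'v option"

definition ends_at :: "('v,'e) mpole \<Rightarrow> 'v \<Rightarrow> ('e \<times> bool) set" where
  "ends_at M z = {h. fst h \<in> edges M \<and> ends M h = Some z}"

definition wf_mpole :: "('v,'e) mpole \<Rightarrow> bool" where
  "wf_mpole M \<longleftrightarrow> finite (verts M) \<and> finite (edges M) \<and>
     (\<forall>e\<in>edges M. \<forall>b. ends M (e,b) = None \<or> the (ends M (e,b)) \<in> verts M)"

text \<open>A colouring: three colours 0,1,2 on the edges; edge ends meeting at a vertex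
get distinct colours (so a loop is never properly coloured).\<close>
definition is_colouring :: "('v,'e) mpole \<Rightarrow> ('e \<Rightarrow> nat) \<Rightarrow> bool" where
  "is_colouring M \<phi> \<longleftrightarrow> (\<forall>e\<in>edges M. \<phi> e < 3) \<and>
     (\<forall>z\<in>verts M. inj_on (\<lambda>h. \<phi> (fst h)) (ends_at M z))"

definition colourable :: "('v,'e) mpole \<Rightarrow> bool" where
  "colourable M \<longleftrightarrow> (\<exists>\<phi>. is_colouring M \<phi>)"

definition incident :: "('v,'e) mpole \<Rightarrow> 'e \<Rightarrow> 'v \<Rightarrow> bool" where
  "incident M e z \<longleftrightarrow> e \<in> edges M \<and> (\<exists>b. ends M (e,b) = Some z)"

definition adjacent :: "('v,'e) mpole \<Rightarrow> 'v \<Rightarrow> 'v \<Rightarrow> bool" where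
  "adjacent M a c \<longleftrightarrow> (\<exists>e\<in>edges M. \<exists>b. ends M (e,b) = Some a \<and> ends M (e,\<not>b) = Some c)"

definition cubic_graph :: "('v,'e) mpole \<Rightarrow> bool" where
  "cubic_graph G \<longleftrightarrow> wf_mpole G \<and>
     (\<forall>e\<in>edges G. \<forall>b. ends G (e,b) \<noteq> None) \<and>
     (\<forall>z\<in>verts G. card (ends_at G z) = 3)"

definition connected_graph :: "('v,'e) mpole \<Rightarrow> bool" where
  "connected_graph G \<longleftrightarrow> verts G \<noteq> {} \<and>
     (\<forall>a\<in>verts G. \<forall>c\<in>verts G. (adjacent G)\<^sup>*\<^sup>* a c)"

definition snark :: "('v,'e) mpole \<Rightarrow> bool" where
  "snark G \<longleftrightarrow> cubic_graph G \<and> connected_graph G \<and> \<not> colourable G"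

text \<open>Deleting a set of vertices: ends at deleted vertices become free; all edges
are kept (an edge joining two deleted vertices becomes an isolated edge).\<close>
definition del_verts :: "('v,'e) mpole \<Rightarrow> 'v set \<Rightarrow> ('v,'e) mpole" where
  "del_verts M S = \<lparr> verts = verts M - S, edges = edges M,
     ends = (\<lambda>h. case ends M h of None \<Rightarrow> None
                   | Some z \<Rightarrow> (if z \<in> S then None else Some z)) \<rparr>"

text \<open>Negator Neg(G;u,v) for the path u w v: delete u, w, v; edges to remaining
vertices become dangling, edges among u, w, v disappear.\<close>
definition negator :: "('v,'e) mpole \<Rightarrow> 'v \<Rightarrow> 'v \<Rightarrow> 'v \<Rightarrow> ('v,'e) mpole" where
  "negator G u w v =
     (let D = del_verts G {u,w,v} in
      D \<lparr> edges := {e \<in> edges G. \<exists>b. ends D (e,b) \<noteq> None} \<rparr>)"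

definition dangling_edge :: "('v,'e) mpole \<Rightarrow> 'e \<Rightarrow> bool" where
  "dangling_edge M e \<longleftrightarrow> e \<in> edges M \<and>
     ((ends M (e,True) = None) \<noteq> (ends M (e,False) = None))"

definition del_edges :: "('v,'e) mpole \<Rightarrow> 'e set \<Rightarrow> ('v,'e) mpole" where
  "del_edges M F = M \<lparr> edges := edges M - F \<rparr>"

text \<open>Suppressing a 2-valent vertex z: the two edge ends h1, h2 at z belong to edges
g1 = fst h1, g2 = fst h2.  If g1 \<noteq> g2, g1 and g2 are replaced by one edge
(realised as g1 whose end h1 is re-attached where the other end of g2 lies, and g2
removed).  If g1 = g2 (a loop at z) the vertex and the loop are removed (the
resulting vertexless circle is trivially colourable, so nothing is lost).\<close>
definition suppress :: "('v,'e) mpole \<Rightarrow> 'v \<Rightarrow> ('v,'e) mpole" where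
  "suppress M z =
     (let (h1, h2) = (SOME p. fst p \<noteq> snd p \<and> ends_at M z = {fst p, snd p})
      in if fst h1 = fst h2 then
           \<lparr> verts = verts M - {z}, edges = edges M - {fst h1}, ends = ends M \<rparr>
         else
           \<lparr> verts = verts M - {z}, edges = edges M - {fst h2},
             ends = (ends M)(h1 := ends M (fst h2, \<not> snd h2)) \<rparr>)"

definition essential_pair :: "('v,'e) mpole \<Rightarrow> 'e \<Rightarrow> 'e \<Rightarrow> bool" where
  "essential_pair G e f \<longleftrightarrow> e \<in> edges G \<and> f \<in> edges G \<and> e \<noteq> f \<and>
     colourable (del_edges G {e,f}) \<and>
     (\<forall>z\<in>verts G. card (ends_at (del_edges G {e,f}) z) = 2 \<longrightarrow>
        colourable (suppress (del_edges G {e,f}) z))"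

end

theory Submission
  imports Defs
begin

lemma ends_at_del_edges: "ends_at (del_edges M F) z = {h \<in> ends_at M z. fst h \<notin> F}"
  by (auto simp: ends_at_def del_edges_def)

lemma extend:
  assumes col: "is_colouring (del_edges M {e}) \<phi>" and eM: "e \<in> edges M"
    and free: "ends M (e,bf) = None"
    and deg: "\<forall>z\<in>verts M. finite (ends_at M z) \<and> card (ends_at M z) \<le> 3"
  shows "\<exists>\<psi>. is_colouring M \<psi> \<and> (\<forall>d. d \<noteq> e \<longrightarrow> \<psi> d = \<phi> d)"
proof -
  have agree: "\<And>c z. inj_on (\<lambda>h. (\<phi>(e:=c)) (fst h)) (ends_at (del_edges M {e}) z) = inj_on (\<lambda>h. \<phi> (fst h)) (ends_at (del_edges M {e}) z)"
    by (rule inj_on_cong) (auto simp: ends_at_del_edges)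
  have E3: "\<forall>d\<in>edges M. d \<noteq> e \<longrightarrow> \<phi> d < 3" using col by (auto simp: is_colouring_def del_edges_def)
  have I: "\<forall>z\<in>verts M. inj_on (\<lambda>h. \<phi> (fst h)) (ends_at (del_edges M {e}) z)"
    using col by (auto simp: is_colouring_def del_edges_def)
  show ?thesis
  proof (cases "ends M (e, \<not> bf)")
    case None
    have en: "ends M (e,b) = None" for b using None free by (cases b; cases bf) auto
    have E: "ends_at M z = ends_at (del_edges M {e}) z" for z
      using en by (auto simp: ends_at_def del_edges_def)
    show ?thesis
      apply (rule exI[of _ "\<phi>(e:=0)"])
      using E3 I agree E by (auto simp: is_colouring_def)
  next
    case (Some b)
    have ec: "ends M (e,c) = (if c = bf then None else Some b)" for c
      using free Some by (cases c; cases bf) auto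
    have E: "z \<noteq> b \<Longrightarrow> ends_at M z = ends_at (del_edges M {e}) z" for z
      using ec by (auto simp: ends_at_def del_edges_def split: if_splits)
    have Eb: "ends_at M b = insert (e, \<not> bf) (ends_at (del_edges M {e}) b)"
      using ec eM by (auto simp: ends_at_def del_edges_def split: if_splits)
    have Eb2: "ends_at (del_edges M {e}) b = ends_at M b - {(e, \<not> bf)}"
      using ec eM by (auto simp: ends_at_def del_edges_def split: if_splits)
    define S where "S = (\<lambda>h. \<phi> (fst h)) ` (ends_at M b - {(e, \<not> bf)})"
    have "card S \<le> 2" if "b \<in> verts M"
    proof -
      have f: "finite (ends_at M b)" and c: "card (ends_at M b) \<le> 3" using deg that by auto
      have "(e, \<not> bf) \<in> ends_at M b" using Eb by auto
      then have "card (ends_at M b - {(e, \<not> bf)}) \<le> 2" using f c by auto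
      then show ?thesis unfolding S_def using f card_image_le
        by (meson finite_Diff le_trans)
    qed
    have "\<exists>c. c < 3 \<and> (b \<in> verts M \<longrightarrow> c \<notin> S)"
    proof (cases "b \<in> verts M")
      case True
      have "card S \<le> 2" using \<open>b \<in> verts M \<Longrightarrow> card S \<le> 2\<close> True by auto
      have "\<not> {0::nat,1,2} \<subseteq> S"
      proof (rule notI)
        assume "{0::nat,1,2} \<subseteq> S"
        moreover have "finite S" unfolding S_def using deg True by auto
        ultimately have "card {0::nat,1,2} \<le> card S" by (rule card_mono[rotated])
        then show False using \<open>card S \<le> 2\<close> by simp
      qed
      then show ?thesis by (metis insert_subsetI empty_subsetI less_numeral_extra(1) zero_less_numeral one_less_numeral_iff semiring_norm(77) lessI numeral_3_eq_3 numeral_2_eq_2 Suc_lessI less_Suc_eq)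
    qed (rule exI[of _ 0], simp)
    then obtain c where c: "c < 3" "b \<in> verts M \<Longrightarrow> c \<notin> S" by blast
    show ?thesis
    proof (rule exI[of _ "\<phi>(e:=c)"], intro conjI allI impI)
      show "is_colouring M (\<phi>(e := c))"
        unfolding is_colouring_def
      proof (intro conjI ballI)
        fix d assume "d \<in> edges M" then show "(\<phi>(e := c)) d < 3" using E3 c by auto
      next
        fix z assume z: "z \<in> verts M"
        show "inj_on (\<lambda>h. (\<phi>(e := c)) (fst h)) (ends_at M z)"
        proof (cases "z = b")
          case False then show ?thesis using E[OF False] agree I z by auto
        next
          case True
          have "inj_on (\<lambda>h. (\<phi>(e := c)) (fst h)) (ends_at (del_edges M {e}) b)"
            using agree I z True by auto
          moreover have "c \<notin> (\<lambda>h. (\<phi>(e := c)) (fst h)) ` (ends_at (del_edges M {e}) b)"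
          proof
            assume "c \<in> (\<lambda>h. (\<phi>(e := c)) (fst h)) ` (ends_at (del_edges M {e}) b)"
            then obtain h where h: "h \<in> ends_at (del_edges M {e}) b" "c = (\<phi>(e := c)) (fst h)" by auto
            then have "fst h \<noteq> e" by (auto simp: ends_at_del_edges)
            then have "c \<in> S" using h Eb2 unfolding S_def by auto
            then show False using c z True by auto
          qed
          moreover have "ends_at (del_edges M {e}) b - {(e, \<not> bf)} = ends_at (del_edges M {e}) b"
            by (auto simp: ends_at_del_edges)
          ultimately show ?thesis unfolding True Eb inj_on_insert by simp
        qed
      qed
    qed auto
  qed
qed

lemma supp_col:
  assumes col: "is_colouring \<lparr>verts = verts G - {x}, edges = (edges G - F) - {q},
                  ends = (ends G)(h1 := ends G (q, \<not> t))\<rparr> \<chi>"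
    and h1: "ends G h1 = Some x" and p: "fst h1 = p" and pq: "p \<noteq> q"
    and pE: "p \<in> edges G" "p \<notin> F" and qE: "q \<in> edges G" "q \<notin> F"
    and h2: "ends G (q,t) = Some x"
  shows "is_colouring (del_edges (del_verts G {x,y}) F) (\<chi>(q := \<chi> p))"
  unfolding is_colouring_def
proof (intro conjI ballI)
  let ?M = "\<lparr>verts = verts G - {x}, edges = (edges G - F) - {q},
                  ends = (ends G)(h1 := ends G (q, \<not> t))\<rparr>"
  have E3: "\<forall>d\<in>edges G - F - {q}. \<chi> d < 3" and I: "\<forall>z\<in>verts G - {x}. inj_on (\<lambda>h. \<chi> (fst h)) (ends_at ?M z)"
    using col by (auto simp: is_colouring_def)
  fix d assume "d \<in> edges (del_edges (del_verts G {x, y}) F)"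
  then show "(\<chi>(q := \<chi> p)) d < 3" using E3 pE pq by (auto simp: del_edges_def del_verts_def)
next
  let ?M = "\<lparr>verts = verts G - {x}, edges = (edges G - F) - {q},
                  ends = (ends G)(h1 := ends G (q, \<not> t))\<rparr>"
  have I: "\<forall>z\<in>verts G - {x}. inj_on (\<lambda>h. \<chi> (fst h)) (ends_at ?M z)"
    using col by (auto simp: is_colouring_def)
  let ?D = "del_edges (del_verts G {x, y}) F"
  fix z assume z: "z \<in> verts ?D"
  then have zG: "z \<in> verts G" "z \<noteq> x" "z \<noteq> y" by (auto simp: del_edges_def del_verts_def)
  have D: "ends_at ?D z = {h. fst h \<in> edges G - F \<and> ends G h = Some z}"
    using zG by (auto simp: ends_at_def del_edges_def del_verts_def split: option.splits if_splits)
  define \<sigma> where "\<sigma> h = (if h = (q, \<not> t) then h1 else h)" for h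
  have h1ne: "h1 \<noteq> (q, \<not> t)" using p pq by auto
  have A: "\<forall>h\<in>ends_at ?D z. (\<chi>(q := \<chi> p)) (fst h) = \<chi> (fst (\<sigma> h))"
  proof
    fix h assume h: "h \<in> ends_at ?D z"
    show "(\<chi>(q := \<chi> p)) (fst h) = \<chi> (fst (\<sigma> h))"
    proof (cases "h = (q, \<not> t)")
      case True then show ?thesis using p by (simp add: \<sigma>_def)
    next
      case False
      have "fst h \<noteq> q"
      proof
        assume "fst h = q"
        then have "h = (q,t)" using False by (cases h) auto
        then show False using h D h2 zG by auto
      qed
      then show ?thesis using False by (simp add: \<sigma>_def)
    qed
  qed
  have B: "\<sigma> ` ends_at ?D z \<subseteq> ends_at ?M z"
  proof
    fix k assume "k \<in> \<sigma> ` ends_at ?D z"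
    then obtain h where h: "h \<in> ends_at ?D z" "k = \<sigma> h" by auto
    show "k \<in> ends_at ?M z"
    proof (cases "h = (q, \<not> t)")
      case True
      then have k: "k = h1" using h by (simp add: \<sigma>_def)
      have "ends G (q, \<not> t) = Some z" using h(1) True D by auto
      moreover have "fst h1 \<in> edges G - F - {q}" using p pE pq by auto
      ultimately show ?thesis unfolding k ends_at_def by simp
    next
      case False
      have "fst h \<noteq> q"
      proof
        assume "fst h = q"
        then have "h = (q,t)" using False by (cases h) auto
        then show False using h D h2 zG by auto
      qed
      moreover have "h \<noteq> h1" using h D h1 zG by auto
      ultimately show ?thesis using False h D by (auto simp: \<sigma>_def ends_at_def)
    qed
  qed
  have C: "inj_on \<sigma> (ends_at ?D z)"
  proof (rule inj_onI)
    fix a b assume a: "a \<in> ends_at ?D z" and b: "b \<in> ends_at ?D z" and ab: "\<sigma> a = \<sigma> b"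
    have "a \<noteq> h1" "b \<noteq> h1" using a b D h1 zG by auto
    then show "a = b" using ab by (auto simp: \<sigma>_def split: if_splits)
  qed
  have "inj_on ((\<lambda>h. \<chi> (fst h)) \<circ> \<sigma>) (ends_at ?D z)"
    using comp_inj_on[OF C inj_on_subset[OF I[rule_format] B]] zG by auto
  then show "inj_on (\<lambda>h. (\<chi>(q := \<chi> p)) (fst h)) (ends_at ?D z)"
    using inj_on_cong[of "ends_at ?D z" "\<lambda>h. (\<chi>(q := \<chi> p)) (fst h)" "(\<lambda>h. \<chi> (fst h)) \<circ> \<sigma>"] A by auto
qed

lemma dangling_other:
  assumes "dangling_edge (del_verts G S) e" "ends G (e,s) = Some x" "x \<in> S"
  shows "\<exists>a. ends G (e, \<not> s) = Some a \<and> a \<notin> S"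
  using assms
  by (cases s) (auto simp: dangling_edge_def del_verts_def split: option.splits if_splits)

lemma ends_at_sub: "ends_at (del_edges (del_verts G S) F) z \<subseteq> ends_at G z"
  by (auto simp: ends_at_def del_edges_def del_verts_def split: option.splits if_splits)

lemma deg_sub:
  assumes "cubic_graph G"
  shows "\<forall>z\<in>verts (del_edges (del_verts G S) F). finite (ends_at (del_edges (del_verts G S) F) z) \<and>
            card (ends_at (del_edges (del_verts G S) F) z) \<le> 3"
proof
  fix z assume "z \<in> verts (del_edges (del_verts G S) F)"
  then have z: "z \<in> verts G" by (auto simp: del_edges_def del_verts_def)
  then have c: "card (ends_at G z) = 3" using assms by (auto simp: cubic_graph_def)
  then have f: "finite (ends_at G z)" by (metis card.infinite zero_neq_numeral)
  show "finite (ends_at (del_edges (del_verts G S) F) z) \<and> card (ends_at (del_edges (del_verts G S) F) z) \<le> 3"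
    using ends_at_sub[of G S F z] f c by (metis card_mono finite_subset)
qed

lemma del_edges_two: "del_edges M {g,f} = del_edges (del_edges M {f}) {g}"
proof -
  have "edges M - {g,f} = edges M - {f} - {g}" by auto
  then show ?thesis by (simp add: del_edges_def)
qed


theorem lemma14:
  fixes G :: "('v,'e) mpole" and u w v x y :: 'v and e' f' :: 'e
  assumes "snark G"
    and "u \<in> verts G" "w \<in> verts G" "v \<in> verts G"
    and "u \<noteq> w" "w \<noteq> v" "u \<noteq> v"
    and "adjacent G u w" "adjacent G w v"
    and "x \<in> {u, v}"
    and "y \<in> verts (negator G u w v)"
    and "\<forall>e. incident G e x \<longrightarrow> (\<exists>f. incident G f y \<and> essential_pair G e f)"
    and "dangling_edge (del_verts G {x, y}) e'" "incident G e' x"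
    and "dangling_edge (del_verts G {x, y}) f'" "incident G f' x"
    and "e' \<noteq> f'"
  shows "\<exists>\<phi>. is_colouring (del_verts G {x, y}) \<phi> \<and> \<phi> e' = \<phi> f'"
proof -
  note A = assms
  have cub: "cubic_graph G" using A(1) by (simp add: snark_def)
  have xV: "x \<in> verts G" using A(2,4,10) by auto
  have yV: "y \<in> verts G" and xy: "x \<noteq> y"
    using A(11) A(10) by (auto simp: negator_def del_verts_def Let_def)
  obtain s where s: "ends G (e',s) = Some x" and e'E: "e' \<in> edges G"
    using A(14) by (auto simp: incident_def)
  obtain t where t: "ends G (f',t) = Some x" and f'E: "f' \<in> edges G"
    using A(16) by (auto simp: incident_def)
  obtain a where a: "ends G (e', \<not> s) = Some a" "a \<notin> {x,y}"
    using dangling_other[OF A(13) s] by auto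
  obtain b where b: "ends G (f', \<not> t) = Some b" "b \<notin> {x,y}"
    using dangling_other[OF A(15) t] by auto
  have e'ends: "ends G (e',c) = (if c = s then Some x else Some a)" for c
    using s a by (cases c; cases s) auto
  have f'ends: "ends G (f',c) = (if c = t then Some x else Some b)" for c
    using t b by (cases c; cases t) auto
  have cx: "card (ends_at G x) = 3" using cub xV by (auto simp: cubic_graph_def)
  then have fx: "finite (ends_at G x)" by (metis card.infinite zero_neq_numeral)
  have two: "{(e',s),(f',t)} \<subseteq> ends_at G x" using s t e'E f'E by (auto simp: ends_at_def)
  have c2: "card {(e',s),(f',t)} = 2" using A(17) by auto
  obtain h3 where h3: "h3 \<in> ends_at G x" "h3 \<notin> {(e',s),(f',t)}"
  proof -
    have "ends_at G x \<noteq> {(e',s),(f',t)}" using cx c2 by auto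
    then show ?thesis using that two by blast
  qed
  have ex: "ends_at G x = {(e',s),(f',t),h3}"
  proof -
    have sub: "{(e',s),(f',t),h3} \<subseteq> ends_at G x" using two h3 by auto
    have "card {(e',s),(f',t),h3} = 3" using h3(2) A(17) by (auto simp: card_insert_if)
    then show ?thesis using card_subset_eq[OF fx sub] cx by auto
  qed
  define g where "g = fst h3"
  have h3x: "ends G h3 = Some x" and gE: "g \<in> edges G" using h3 by (auto simp: ends_at_def g_def)
  have ge': "g \<noteq> e'"
  proof
    assume "g = e'"
    then have "h3 = (e', snd h3)" unfolding g_def by auto
    then show False using h3x h3(2) e'ends[of "snd h3"] a(2) by (auto split: if_splits)
  qed
  have gf': "g \<noteq> f'"
  proof
    assume "g = f'"
    then have "h3 = (f', snd h3)" unfolding g_def by auto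
    then show False using h3x h3(2) f'ends[of "snd h3"] b(2) by (auto split: if_splits)
  qed
  have "incident G g x" using gE h3x unfolding incident_def g_def by (metis prod.collapse)
  then obtain f where fy: "incident G f y" and ess: "essential_pair G g f" using A(12) by blast
  obtain cf where cf: "ends G (f,cf) = Some y" and fE: "f \<in> edges G" using fy by (auto simp: incident_def)
  have fe': "f \<noteq> e'" using cf e'ends[of cf] xy a(2) by (auto split: if_splits)
  have ff': "f \<noteq> f'" using cf f'ends[of cf] xy b(2) by (auto split: if_splits)
  have gf: "g \<noteq> f" using ess by (simp add: essential_pair_def)
  let ?H = "del_edges G {g,f}"
  have eH: "ends_at ?H x = {(e',s),(f',t)}"
    unfolding ends_at_del_edges ex using ge' gf' fe' ff' by (auto simp: g_def)
  have "card (ends_at ?H x) = 2" using eH c2 by simp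
  then have "colourable (suppress ?H x)" using ess xV by (simp add: essential_pair_def)
  define P where "P = (\<lambda>p::('e \<times> bool) \<times> ('e \<times> bool). fst p \<noteq> snd p \<and> ends_at ?H x = {fst p, snd p})"
  have "P ((e',s),(f',t))" using eH A(17) by (simp add: P_def)
  then have PS: "P (SOME p. P p)" by (rule someI)
  obtain h1 h2 where hh: "(SOME p. P p) = (h1,h2)" by (cases "SOME p. P p") auto
  have P12: "h1 \<noteq> h2" "{h1,h2} = {(e',s),(f',t)}" using PS hh eH by (auto simp: P_def)
  then have cases12: "(h1 = (e',s) \<and> h2 = (f',t)) \<or> (h1 = (f',t) \<and> h2 = (e',s))"
    by (metis doubleton_eq_iff)
  have fne: "fst h1 \<noteq> fst h2" using cases12 A(17) by auto
  have supp: "suppress ?H x = \<lparr>verts = verts G - {x}, edges = (edges G - {g,f}) - {fst h2},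
                  ends = (ends G)(h1 := ends G (fst h2, \<not> snd h2))\<rparr>"
    using hh fne unfolding suppress_def P_def[symmetric] by (simp add: del_edges_def)
  obtain \<chi> where chi: "is_colouring \<lparr>verts = verts G - {x}, edges = (edges G - {g,f}) - {fst h2},
                  ends = (ends G)(h1 := ends G (fst h2, \<not> snd h2))\<rparr> \<chi>"
    using \<open>colourable (suppress ?H x)\<close> supp by (auto simp: colourable_def)
  have h1x: "ends G h1 = Some x" and h2x: "ends G (fst h2, snd h2) = Some x"
    using cases12 s t by auto
  have h1E: "fst h1 \<in> edges G" "fst h1 \<notin> {g,f}" and h2E: "fst h2 \<in> edges G" "fst h2 \<notin> {g,f}"
    using cases12 e'E f'E ge' gf' fe' ff' by auto
  have col0: "is_colouring (del_edges (del_verts G {x,y}) {g,f}) (\<chi>(fst h2 := \<chi> (fst h1)))"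
    by (rule supp_col[OF chi h1x refl fne h1E h2E h2x])
  define \<phi>0 where "\<phi>0 = \<chi>(fst h2 := \<chi> (fst h1))"
  have eq0: "\<phi>0 e' = \<phi>0 f'" using cases12 fne unfolding \<phi>0_def by auto
  let ?M0 = "del_verts G {x,y}"
  have col0': "is_colouring (del_edges (del_edges ?M0 {f}) {g}) \<phi>0"
    using col0 unfolding \<phi>0_def del_edges_two by simp
  have deg1: "\<forall>z\<in>verts (del_edges ?M0 {f}). finite (ends_at (del_edges ?M0 {f}) z) \<and> card (ends_at (del_edges ?M0 {f}) z) \<le> 3"
    by (rule deg_sub[OF cub])
  have free1: "ends (del_edges ?M0 {f}) (g, snd h3) = None"
    using h3x by (simp add: del_edges_def del_verts_def g_def)
  have gM: "g \<in> edges (del_edges ?M0 {f})" using gE gf by (simp add: del_edges_def del_verts_def)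
  obtain \<phi>1 where p1: "is_colouring (del_edges ?M0 {f}) \<phi>1" "\<forall>d. d \<noteq> g \<longrightarrow> \<phi>1 d = \<phi>0 d"
    using extend[OF col0' gM free1 deg1] by blast
  have deg2: "\<forall>z\<in>verts ?M0. finite (ends_at ?M0 z) \<and> card (ends_at ?M0 z) \<le> 3"
    using deg_sub[OF cub, of "{x,y}" "{}"] by (simp add: del_edges_def)
  have free2: "ends ?M0 (f, cf) = None" using cf by (simp add: del_verts_def)
  have fM: "f \<in> edges ?M0" using fE by (simp add: del_verts_def)
  obtain \<phi>2 where p2: "is_colouring ?M0 \<phi>2" "\<forall>d. d \<noteq> f \<longrightarrow> \<phi>2 d = \<phi>1 d"
    using extend[OF p1(1) fM free2 deg2] by blast
  show ?thesis
    using p2 p1(2) eq0 ge' gf' fe' ff' by (intro exI[of _ \<phi>2]) auto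
qed

end
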